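(* Let $I$ be a nonzero ideal of $\mathbb{Z}[\zeta_8]$. Then there exists a generator $\alpha'$ of $I$ (i.e. $I=(\alpha')$) which is a shortest nonzero vector of $I$ under the canonical embedding, i.e. $\|\Sigma_{\mathbb{Q}(\zeta_8)}(\alpha')\|\le\|\Sigma_{\mathbb{Q}(\zeta_8)}(\gamma)\|$ for every nonzero $\gamma\in I$.
   Context: $\zeta_8=e^{2\pi i/8}$. For a number field $\mathbb{K}$ with complex embeddings $\varphi_1,\dots,\varphi_t$ (all of them), the canonical embedding is $\Sigma_{\mathbb{K}}(x)=(\varphi_1(x),\dots,\varphi_t(x))$ with $\|\Sigma_{\mathbb{K}}(x)\|^2=\sum_j|\varphi_j(x)|^2$. *)

theory Defs
  imports Complex_Main
begin

definition zeta8 :: complex where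
  "zeta8 = cis (2 * pi / 8)"

definition Z8 :: "complex set" where
  "Z8 = {of_int a + of_int b * zeta8 + of_int c * zeta8 ^ 2 + of_int d * zeta8 ^ 3
         | a b c d :: int. True}"

text \<open>The complex embeddings of Q(zeta_8) restricted to Z[zeta_8]: phi_k sends zeta_8 to
  zeta_8^k, for k in {1,3,5,7}. (Well defined since 1, zeta_8, zeta_8^2, zeta_8^3 is a
  Z-basis of Z[zeta_8].)\<close>
definition emb :: "nat \<Rightarrow> complex \<Rightarrow> complex" where
  "emb k x = (THE y. \<exists>a b c d :: int.
      x = of_int a + of_int b * zeta8 + of_int c * zeta8 ^ 2 + of_int d * zeta8 ^ 3 \<and>
      y = of_int a + of_int b * zeta8 ^ k + of_int c * zeta8 ^ (2 * k) + of_int d * zeta8 ^ (3 * k))"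

definition canon_norm :: "complex \<Rightarrow> real" where
  "canon_norm x = sqrt (\<Sum>k\<in>{1,3,5,7::nat}. (cmod (emb k x))\<^sup>2)"

definition is_ideal_Z8 :: "complex set \<Rightarrow> bool" where
  "is_ideal_Z8 I \<longleftrightarrow> I \<subseteq> Z8 \<and> 0 \<in> I \<and> (\<forall>x\<in>I. \<forall>y\<in>I. x + y \<in> I)
      \<and> (\<forall>r\<in>Z8. \<forall>x\<in>I. r * x \<in> I)"

definition principal_Z8 :: "complex \<Rightarrow> complex set" where
  "principal_Z8 \<alpha> = {r * \<alpha> | r. r \<in> Z8}"

end

theory Submission
  imports Defs
begin

definition vec :: "int \<Rightarrow> int \<Rightarrow> int \<Rightarrow> int \<Rightarrow> complex" where
  "vec a b c d = of_int a + of_int b * zeta8 + of_int c * zeta8 ^ 2 + of_int d * zeta8 ^ 3"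

lemma s2: "(sqrt 2 / 2) * (sqrt 2 / 2) = (1/2::real)"
  by (simp add: field_simps)

lemma zeta8_eq: "zeta8 = Complex (sqrt 2 / 2) (sqrt 2 / 2)"
  unfolding zeta8_def cis.ctr by (simp add: cos_45 sin_45)

lemma zeta8_2: "zeta8 ^ 2 = \<i>"
  unfolding zeta8_eq power2_eq_square complex_eq_iff by (simp add: s2)

lemma zeta8_3: "zeta8 ^ 3 = Complex (- (sqrt 2 / 2)) (sqrt 2 / 2)"
proof -
  have "zeta8 ^ 3 = zeta8 ^ 2 * zeta8" by (simp add: power3_eq_cube power2_eq_square)
  also have "\<dots> = \<i> * Complex (sqrt 2 / 2) (sqrt 2 / 2)" by (simp only: zeta8_2) (simp add: zeta8_eq)
  finally show ?thesis by (simp add: complex_eq_iff)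
qed

lemma zeta8_4: "zeta8 ^ 4 = -1"
proof -
  have "zeta8 ^ 4 = (zeta8 ^ 2)^2" by (simp flip: power_mult)
  then show ?thesis by (simp add: zeta8_2)
qed

lemma vec_Complex: "vec a b c d = Complex (a + (b - d) * (sqrt 2 / 2)) (c + (b + d) * (sqrt 2 / 2))"
  unfolding vec_def zeta8_2 zeta8_3 by (simp add: zeta8_eq complex_eq_iff field_simps)

lemma nat_sq2: "(b::nat)^2 = 2 * a^2 \<Longrightarrow> b = 0"
proof (induction b arbitrary: a rule: less_induct)
  case (less b)
  from less.prems have "even (b^2)" by simp
  hence "even b" by simp
  then obtain b' where b': "b = 2 * b'" by blast
  hence "2 * b'^2 = a^2" using less.prems by (simp add: power2_eq_square)
  hence "even (a^2)" by (metis dvd_triv_left)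
  hence "even a" by simp
  then obtain a' where a': "a = 2 * a'" by blast
  have "b'^2 = 2 * a'^2" using \<open>2 * b'^2 = a^2\<close> a' by (simp add: power2_eq_square)
  show ?case
  proof (rule ccontr)
    assume "b \<noteq> 0"
    hence "b' < b" using b' by simp
    hence "b' = 0" using less.IH \<open>b'^2 = 2 * a'^2\<close> by blast
    thus False using b' \<open>b \<noteq> 0\<close> by simp
  qed
qed

lemma int_sq2: "(b::int)^2 = 2 * a^2 \<Longrightarrow> b = 0"
proof -
  assume h: "b^2 = 2 * a^2"
  have "int (nat \<bar>b\<bar> ^ 2) = int (2 * nat \<bar>a\<bar> ^ 2)" using h by simp
  hence "nat \<bar>b\<bar> ^ 2 = 2 * nat \<bar>a\<bar> ^ 2" by (simp only: of_nat_eq_iff)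
  thus "b = 0" using nat_sq2 by fastforce
qed

lemma lin_irr: assumes "real_of_int a + real_of_int b * (sqrt 2 / 2) = 0" shows "a = 0 \<and> b = 0"
proof -
  have "real_of_int b * sqrt 2 = - 2 * a" using assms by (simp add: field_simps)
  hence "(real_of_int b * sqrt 2)^2 = (2 * a)^2" by simp
  hence "real_of_int (b^2) = real_of_int (2 * a ^2)" by (simp add: power_mult_distrib)
  hence "b^2 = 2 * a^2" by (simp only: of_int_eq_iff)
  hence "b = 0" by (rule int_sq2)
  thus ?thesis using assms by simp
qed

lemma vec_inj: assumes "vec a b c d = vec a' b' c' d'" shows "a = a' \<and> b = b' \<and> c = c' \<and> d = d'"
proof -
  have 1: "real_of_int (a - a') + real_of_int ((b - d) - (b' - d')) * (sqrt 2 / 2) = 0"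
    using assms unfolding vec_Complex complex_eq_iff by (simp add: field_simps)
  have 2: "real_of_int (c - c') + real_of_int ((b + d) - (b' + d')) * (sqrt 2 / 2) = 0"
    using assms unfolding vec_Complex complex_eq_iff by (simp add: field_simps)
  show ?thesis using lin_irr[OF 1] lin_irr[OF 2] by auto
qed

lemma vec_mult: "vec a b c d * vec e f g h =
  vec (a*e - b*h - c*g - d*f) (a*f + b*e - c*h - d*g) (a*g + b*f + c*e - d*h) (a*h + b*g + c*f + d*e)"
proof -
  have z: "zeta8 ^ 4 = -1" by (rule zeta8_4)
  show ?thesis unfolding vec_def of_int_add of_int_diff of_int_mult using z by algebra
qed


lemma Z8_iff: "x \<in> Z8 \<longleftrightarrow> (\<exists>a b c d. x = vec a b c d)"
  unfolding Z8_def vec_def by auto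

lemma vec_in: "vec a b c d \<in> Z8" using Z8_iff by blast

lemma emb_vec: "emb k (vec a b c d) =
   of_int a + of_int b * zeta8 ^ k + of_int c * zeta8 ^ (2 * k) + of_int d * zeta8 ^ (3 * k)"
  unfolding emb_def
proof (rule the_equality)
  show "\<exists>a' b' c' d'. vec a b c d = of_int a' + of_int b' * zeta8 + of_int c' * zeta8\<^sup>2 + of_int d' * zeta8 ^ 3 \<and>
      of_int a + of_int b * zeta8 ^ k + of_int c * zeta8 ^ (2 * k) + of_int d * zeta8 ^ (3 * k) =
      of_int a' + of_int b' * zeta8 ^ k + of_int c' * zeta8 ^ (2 * k) + of_int d' * zeta8 ^ (3 * k)"
    unfolding vec_def by blast
next
  fix y assume "\<exists>a' b' c' d'. vec a b c d = of_int a' + of_int b' * zeta8 + of_int c' * zeta8\<^sup>2 + of_int d' * zeta8 ^ 3 \<and>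
      y = of_int a' + of_int b' * zeta8 ^ k + of_int c' * zeta8 ^ (2 * k) + of_int d' * zeta8 ^ (3 * k)"
  then obtain a' b' c' d' where h: "vec a b c d = vec a' b' c' d'" and
     y: "y = of_int a' + of_int b' * zeta8 ^ k + of_int c' * zeta8 ^ (2 * k) + of_int d' * zeta8 ^ (3 * k)"
    unfolding vec_def by blast
  from vec_inj[OF h] y show "y = of_int a + of_int b * zeta8 ^ k + of_int c * zeta8 ^ (2 * k) + of_int d * zeta8 ^ (3 * k)"
    by simp
qed

lemma emb1: "emb 1 (vec a b c d) = vec a b c d"
  unfolding emb_vec by (simp add: vec_def)

lemma emb3: "emb 3 (vec a b c d) = vec a d (-c) b"
proof -
  have z: "zeta8 ^ 4 = -1" by (rule zeta8_4)
  show ?thesis unfolding emb_vec by (simp add: vec_def) (use z in algebra)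
qed

lemma emb5: "emb 5 (vec a b c d) = vec a (-b) c (-d)"
proof -
  have z: "zeta8 ^ 4 = -1" by (rule zeta8_4)
  show ?thesis unfolding emb_vec by (simp add: vec_def) (use z in algebra)
qed

lemma emb7: "emb 7 (vec a b c d) = vec a (-d) (-c) (-b)"
proof -
  have z: "zeta8 ^ 4 = -1" by (rule zeta8_4)
  show ?thesis unfolding emb_vec by (simp add: vec_def) (use z in algebra)
qed

lemma cnj_vec: "cnj (vec a b c d) = vec a (-d) (-c) (-b)"
  unfolding vec_Complex complex_cnj complex_eq_iff by (simp add: algebra_simps)

lemma sqrt2sq: "sqrt 2 * sqrt 2 = (2::real)" by simp

lemma cmod_vec: "(cmod (vec a b c d))^2 = real_of_int (a^2+b^2+c^2+d^2) + sqrt 2 * real_of_int (a*b - a*d + b*c + c*d)"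
proof -
  have "(cmod (vec a b c d))^2 = (a + (b - d) * (sqrt 2 / 2))^2 + (c + (b + d) * (sqrt 2 / 2))^2"
    unfolding vec_Complex cmod_power2 by simp
  also have "\<dots> = real_of_int (a^2+b^2+c^2+d^2) + sqrt 2 * real_of_int (a*b - a*d + b*c + c*d)"
    by (simp add: power2_eq_square algebra_simps) (simp add: field_simps)
  finally show ?thesis .
qed


definition sg :: "complex \<Rightarrow> complex" where "sg x = emb 3 x"
definition Sr :: "complex \<Rightarrow> real" where "Sr x = (cmod x)^2 + (cmod (sg x))^2"
definition Nr :: "complex \<Rightarrow> real" where "Nr x = (cmod x)^2 * (cmod (sg x))^2"

lemma sg_vec: "sg (vec a b c d) = vec a d (-c) b" unfolding sg_def by (rule emb3)

lemma vec0: "vec 0 0 0 0 = 0" unfolding vec_def by simp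

lemma Z8E: "x \<in> Z8 \<Longrightarrow> (\<And>a b c d. x = vec a b c d \<Longrightarrow> P) \<Longrightarrow> P"
  unfolding Z8_iff by blast

lemma Z8_mult: "x \<in> Z8 \<Longrightarrow> y \<in> Z8 \<Longrightarrow> x * y \<in> Z8"
  by (erule Z8E)+ (simp add: vec_mult vec_in)

lemma vec_add: "vec a b c d + vec e f g h = vec (a+e) (b+f) (c+g) (d+h)"
  unfolding vec_def by (simp add: algebra_simps)

lemma vec_uminus: "- vec a b c d = vec (-a) (-b) (-c) (-d)"
  unfolding vec_def by (simp add: algebra_simps)

lemma Z8_add: "x \<in> Z8 \<Longrightarrow> y \<in> Z8 \<Longrightarrow> x + y \<in> Z8"
  by (erule Z8E)+ (simp add: vec_add vec_in)

lemma Z8_uminus: "x \<in> Z8 \<Longrightarrow> - x \<in> Z8"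
  by (erule Z8E)+ (simp add: vec_uminus vec_in)

lemma Z8_diff: "x \<in> Z8 \<Longrightarrow> y \<in> Z8 \<Longrightarrow> x - y \<in> Z8"
  using Z8_add[OF _ Z8_uminus] by (metis diff_conv_add_uminus)

lemma vec_of_int: "vec n 0 0 0 = of_int n" unfolding vec_def by simp

lemma Z8_1: "1 \<in> Z8" using vec_in[of 1 0 0 0] vec_of_int[of 1] by simp

lemma sg_in: "x \<in> Z8 \<Longrightarrow> sg x \<in> Z8"
  by (erule Z8E)+ (simp add: sg_vec vec_in)

lemma cnj_in: "x \<in> Z8 \<Longrightarrow> cnj x \<in> Z8"
  by (erule Z8E)+ (simp add: cnj_vec vec_in)

lemma sg_mult: "x \<in> Z8 \<Longrightarrow> y \<in> Z8 \<Longrightarrow> sg (x * y) = sg x * sg y"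
  unfolding Z8_iff by (auto simp: vec_mult sg_vec algebra_simps)

lemma cmod_sg_vec: "(cmod (sg (vec a b c d)))^2 = real_of_int (a^2+b^2+c^2+d^2) - sqrt 2 * real_of_int (a*b - a*d + b*c + c*d)"
  unfolding sg_vec cmod_vec by (simp add: algebra_simps)

lemma Sr_vec: "Sr (vec a b c d) = 2 * real_of_int (a^2+b^2+c^2+d^2)"
  unfolding Sr_def cmod_vec cmod_sg_vec by simp

lemma Nr_vec: "Nr (vec a b c d) = real_of_int ((a^2+b^2+c^2+d^2)^2 - 2 * (a*b - a*d + b*c + c*d)^2)"
  unfolding Nr_def cmod_vec cmod_sg_vec by (simp add: algebra_simps power2_eq_square)

lemma cm5: "cmod (vec a (-b) c (-d)) = cmod (vec a d (-c) b)"
  by (metis cnj_vec complex_mod_cnj minus_minus)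
lemma cm7: "cmod (vec a (-d) (-c) (-b)) = cmod (vec a b c d)"
  by (metis cnj_vec complex_mod_cnj)

lemma canon_norm_eq: "x \<in> Z8 \<Longrightarrow> canon_norm x = sqrt (2 * Sr x)"
  unfolding Z8_iff canon_norm_def
  by (auto simp: emb1[simplified] emb3 emb5 emb7 Sr_def sg_vec cm5 cm7)

lemma Nr_mult: "x \<in> Z8 \<Longrightarrow> y \<in> Z8 \<Longrightarrow> Nr (x * y) = Nr x * Nr y"
  unfolding Nr_def by (simp add: sg_mult norm_mult power_mult_distrib)

lemma Sr_mult: "x \<in> Z8 \<Longrightarrow> y \<in> Z8 \<Longrightarrow> Sr (x * y) = (cmod x)^2 * (cmod y)^2 + (cmod (sg x))^2 * (cmod (sg y))^2"
  unfolding Sr_def by (simp add: sg_mult norm_mult power_mult_distrib)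

lemma sg_nz: "x \<in> Z8 \<Longrightarrow> x \<noteq> 0 \<Longrightarrow> sg x \<noteq> 0"
proof (erule Z8E)
  fix a b c d assume x: "x = vec a b c d" "x \<noteq> 0"
  show "sg x \<noteq> 0"
  proof
    assume "sg x = 0"
    hence "vec a d (-c) b = vec 0 0 0 0" using x by (simp add: sg_vec vec0)
    hence "a = 0 \<and> b = 0 \<and> c = 0 \<and> d = 0" using vec_inj by fastforce
    thus False using x vec0 by simp
  qed
qed

lemma Nr_int: "x \<in> Z8 \<Longrightarrow> \<exists>n::int. Nr x = of_int n"
  unfolding Z8_iff using Nr_vec by blast

lemma Sr_int: "x \<in> Z8 \<Longrightarrow> \<exists>n::int. Sr x = of_int n"
  unfolding Z8_iff using Sr_vec by (metis of_int_mult of_int_numeral)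

lemma Nr_pos: "x \<in> Z8 \<Longrightarrow> x \<noteq> 0 \<Longrightarrow> Nr x > 0"
  unfolding Nr_def using sg_nz by simp

lemma Nr_ge1: "x \<in> Z8 \<Longrightarrow> x \<noteq> 0 \<Longrightarrow> Nr x \<ge> 1"
  using Nr_int Nr_pos by (metis of_int_0_less_iff of_int_1_le_iff int_one_le_iff_zero_less)

definition star :: "complex \<Rightarrow> complex" where "star x = cnj x * sg x * cnj (sg x)"

lemma star_in: "x \<in> Z8 \<Longrightarrow> star x \<in> Z8"
  unfolding star_def by (intro Z8_mult cnj_in sg_in)

lemma mult_star: "x * star x = complex_of_real (Nr x)"
proof -
  have "x * star x = (x * cnj x) * (sg x * cnj (sg x))" unfolding star_def by (simp add: algebra_simps)
  also have "\<dots> = complex_of_real (Nr x)" unfolding Nr_def of_real_mult complex_norm_square by simp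
  finally show ?thesis .
qed


lemma div_round: assumes "(n::int) > 0" shows "\<exists>q. \<bar>2 * (w - n * q)\<bar> \<le> n"
proof -
  define q where "q = (2 * w + n) div (2 * n)"
  define m where "m = (2 * w + n) mod (2 * n)"
  have e: "2 * w + n = 2 * n * q + m" unfolding q_def m_def by simp
  have "0 \<le> m" "m < 2 * n" unfolding m_def using assms by simp_all
  hence "\<bar>2 * (w - n * q)\<bar> \<le> n" using e by (simp add: algebra_simps abs_le_iff)
  thus ?thesis by blast
qed

lemma sq_bound: assumes "\<bar>2 * (r::int)\<bar> \<le> n" shows "4 * r^2 \<le> n^2"
proof -
  have "\<bar>2 * r\<bar> \<le> \<bar>n\<bar>" using assms by simp
  hence "(2*r)^2 \<le> n^2" by (simp only: abs_le_square_iff)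
  thus ?thesis by (simp add: power_mult_distrib)
qed

lemma small_N:
  fixes a b c d n :: int
  assumes n: "n > 0" and h: "\<bar>2*a\<bar> \<le> n" "\<bar>2*b\<bar> \<le> n" "\<bar>2*c\<bar> \<le> n" "\<bar>2*d\<bar> \<le> n"
  shows "(a^2+b^2+c^2+d^2)^2 - 2 * (a*b - a*d + b*c + c*d)^2 < n^4"
proof -
  define S where "S = a^2+b^2+c^2+d^2"
  define T where "T = a*b - a*d + b*c + c*d"
  have ha: "4*a^2 \<le> n^2" and hb: "4*b^2 \<le> n^2" and hc: "4*c^2 \<le> n^2" and hd: "4*d^2 \<le> n^2"
    using sq_bound h by auto
  have S0: "0 \<le> S" unfolding S_def by simp
  have "S \<le> n^2" unfolding S_def using ha hb hc hd by linarith
  show ?thesis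
  proof (cases "S < n^2")
    case True
    have "S^2 < (n^2)^2" using True S0 by (intro power_strict_mono) auto
    hence "S^2 < n^4" by simp
    moreover have "0 \<le> T^2" by simp
    ultimately show ?thesis unfolding S_def[symmetric] T_def[symmetric] by linarith
  next
    case False
    hence Se: "S = n^2" using \<open>S \<le> n^2\<close> by simp
    have "4*a^2 = n^2" "4*b^2 = n^2" "4*c^2 = n^2" "4*d^2 = n^2"
      using ha hb hc hd Se unfolding S_def by linarith+
    hence A: "(2*a)^2 = n^2" and B: "(2*b)^2 = n^2" and C: "(2*c)^2 = n^2" and D: "(2*d)^2 = n^2"
      by (simp_all add: power_mult_distrib)
    define A' where "A' = 2*a"
    define B' where "B' = 2*b"
    define C' where "C' = 2*c"
    define D' where "D' = 2*d"
    have "4*T = A' * (B' - D') + C' * (B' + D')" unfolding T_def A'_def B'_def C'_def D'_def by (simp add: algebra_simps)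
    hence "(4*T)^2 = (A' * (B' - D') + C' * (B' + D'))^2" by (simp only:)
    also have "\<dots> = A'^2 * (B' - D')^2 + C'^2 * (B' + D')^2 + 2 * A' * C' * (B'^2 - D'^2)"
      by (simp add: power2_eq_square algebra_simps)
    also have "\<dots> = n^2 * ((B' - D')^2 + (B' + D')^2)"
      using A B C D unfolding A'_def B'_def C'_def D'_def by (simp add: algebra_simps)
    also have "\<dots> = n^2 * (2 * B'^2 + 2 * D'^2)" by (simp add: power2_eq_square algebra_simps)
    also have "\<dots> = 4 * (n^2)^2" using B D unfolding B'_def D'_def by (simp add: power2_eq_square)
    finally have "(4*T)^2 = 4 * (n^2)^2" .
    hence "16 * T^2 = 4 * n^4" by (simp add: power_mult_distrib flip: power_mult)
    moreover have "S^2 = n^4" using Se by (simp flip: power_mult)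
    moreover have "n^4 > 0" using n by simp
    ultimately show ?thesis unfolding S_def[symmetric] T_def[symmetric] by linarith
  qed
qed

lemma Nr_of_int: "Nr (of_int n) = real_of_int n ^ 4"
  using Nr_vec[of n 0 0 0] unfolding vec_of_int by (simp flip: power_mult)

lemma vec_diff: "vec a b c d - vec e f g h = vec (a-e) (b-f) (c-g) (d-h)"
  unfolding vec_def by (simp add: algebra_simps)

lemma euclid:
  assumes b: "\<beta> \<in> Z8" "\<beta> \<noteq> 0" and g: "\<gamma> \<in> Z8"
  shows "\<exists>q\<in>Z8. Nr (\<gamma> - q * \<beta>) < Nr \<beta>"
proof -
  obtain n where n: "Nr \<beta> = of_int n" using Nr_int b by blast
  have n1: "n > 0" using Nr_pos[OF b] n by simp
  have w: "\<gamma> * star \<beta> \<in> Z8" using g b star_in Z8_mult by blast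
  then obtain w0 w1 w2 w3 where wv: "\<gamma> * star \<beta> = vec w0 w1 w2 w3" by (erule Z8E)
  obtain q0 where q0: "\<bar>2 * (w0 - n * q0)\<bar> \<le> n" using div_round n1 by blast
  obtain q1 where q1: "\<bar>2 * (w1 - n * q1)\<bar> \<le> n" using div_round n1 by blast
  obtain q2 where q2: "\<bar>2 * (w2 - n * q2)\<bar> \<le> n" using div_round n1 by blast
  obtain q3 where q3: "\<bar>2 * (w3 - n * q3)\<bar> \<le> n" using div_round n1 by blast
  define q where "q = vec q0 q1 q2 q3"
  have qZ: "q \<in> Z8" unfolding q_def by (rule vec_in)
  define \<delta> where "\<delta> = \<gamma> - q * \<beta>"
  have dZ: "\<delta> \<in> Z8" unfolding \<delta>_def using g qZ b Z8_mult Z8_diff by blast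
  have "\<delta> * star \<beta> = \<gamma> * star \<beta> - q * (\<beta> * star \<beta>)" unfolding \<delta>_def by (simp add: algebra_simps)
  also have "\<dots> = vec w0 w1 w2 w3 - q * vec n 0 0 0" unfolding wv mult_star n vec_of_int by simp
  also have "q * vec n 0 0 0 = vec (n * q0) (n * q1) (n * q2) (n * q3)"
    unfolding q_def vec_mult by (simp add: mult.commute)
  also have "vec w0 w1 w2 w3 - \<dots> = vec (w0 - n * q0) (w1 - n * q1) (w2 - n * q2) (w3 - n * q3)"
    by (rule vec_diff)
  finally have r: "\<delta> * star \<beta> = vec (w0 - n * q0) (w1 - n * q1) (w2 - n * q2) (w3 - n * q3)" .
  define N where "N = real_of_int n"
  have N0: "N > 0" unfolding N_def using n1 by simp
  have "Nr (\<delta> * star \<beta>) < N ^ 4"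
    unfolding r Nr_vec N_def using small_N[OF n1 q0 q1 q2 q3]
    by (metis of_int_less_iff of_int_power)
  hence lt: "Nr \<delta> * Nr (star \<beta>) < N ^ 4" using Nr_mult dZ star_in b by simp
  have "Nr \<beta> * Nr (star \<beta>) = Nr (\<beta> * star \<beta>)" using Nr_mult b star_in by simp
  also have "\<dots> = N ^ 4" unfolding mult_star n N_def by (metis Nr_of_int of_real_of_int_eq)
  also have "\<dots> = N * N ^ 3" by (simp add: eval_nat_numeral)
  finally have "N * Nr (star \<beta>) = N * N ^ 3" unfolding n N_def .
  hence ns: "Nr (star \<beta>) = N ^ 3" using N0 by simp
  have "Nr \<delta> * N ^ 3 < N * N ^ 3" using lt unfolding ns by (simp add: eval_nat_numeral)
  hence "Nr \<delta> < N" using N0 by (simp add: mult_less_cancel_right)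
  thus ?thesis using qZ n unfolding \<delta>_def N_def by auto
qed

lemma key_ineq:
  fixes p q X Y :: real
  assumes p: "p \<ge> 0" and q: "q \<ge> 0" and X: "X \<ge> 0" and Y: "Y \<ge> 0" and XY: "X * Y \<ge> 2"
    and h1: "p + q \<le> p * (3 + 2 * sqrt 2) + q * (3 - 2 * sqrt 2)"
    and h2: "p + q \<le> p * (3 - 2 * sqrt 2) + q * (3 + 2 * sqrt 2)"
  shows "p + q \<le> p * X + q * Y"
proof -
  define r where "r = sqrt (2::real)"
  have r2: "r * r = 2" unfolding r_def by simp
  have g1: "q * (r - 1) - p * (r + 1) \<le> 0" using h1 unfolding r_def[symmetric] by (simp add: algebra_simps)
  have g2: "p * (r - 1) - q * (r + 1) \<le> 0" using h2 unfolding r_def[symmetric] by (simp add: algebra_simps)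
  have "0 \<le> (q * (r - 1) - p * (r + 1)) * (p * (r - 1) - q * (r + 1))"
    using g1 g2 by (rule mult_nonpos_nonpos)
  also have "\<dots> = p * q * (2 * (r * r) + 2) - p * p * (r * r - 1) - q * q * (r * r - 1)"
    by (simp add: algebra_simps)
  also have "\<dots> = 6 * p * q - p * p - q * q" unfolding r2 by simp
  finally have k: "(p + q) * (p + q) \<le> 8 * p * q" by (simp add: algebra_simps)
  have "0 \<le> 4 * (p * q) * (X * Y - 2)" using XY p q by simp
  hence "8 * p * q \<le> 4 * (p * q) * (X * Y)" by (simp add: algebra_simps)
  also have "\<dots> \<le> (p * X + q * Y) * (p * X + q * Y)"
  proof -
    have "0 \<le> (p * X - q * Y) * (p * X - q * Y)" by simp
    thus ?thesis by (simp add: algebra_simps)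
  qed
  finally have "(p + q)^2 \<le> (p * X + q * Y)^2" using k unfolding power2_eq_square by linarith
  moreover have "0 \<le> p * X + q * Y" using p q X Y by simp
  ultimately show ?thesis by (rule power2_le_imp_le)
qed

lemma Nr_nonneg: "Nr x \<ge> 0" unfolding Nr_def by simp
lemma Sr_nonneg: "Sr x \<ge> 0" unfolding Sr_def by simp

lemma nat_floor_int: assumes "y = real_of_int n" "y \<ge> 0" shows "real (nat \<lfloor>y\<rfloor>) = y"
  using assms by simp

lemma principal_exists:
  assumes I: "is_ideal_Z8 I" and nz: "I \<noteq> {0}"
  shows "\<exists>\<beta>\<in>I. \<beta> \<noteq> 0 \<and> I = principal_Z8 \<beta>"
proof -
  have sub: "I \<subseteq> Z8" and z: "0 \<in> I" and add: "\<And>x y. x \<in> I \<Longrightarrow> y \<in> I \<Longrightarrow> x + y \<in> I"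
    and mul: "\<And>r x. r \<in> Z8 \<Longrightarrow> x \<in> I \<Longrightarrow> r * x \<in> I"
    using I unfolding is_ideal_Z8_def by auto
  obtain x where x: "x \<in> I" "x \<noteq> 0" using nz z by blast
  define m where "m = (\<lambda>y. nat \<lfloor>Nr y\<rfloor>)"
  have mr: "real (m y) = Nr y" if "y \<in> Z8" for y
    using Nr_int[OF that] Nr_nonneg unfolding m_def by (metis nat_floor_int)
  obtain \<beta> where b: "\<beta> \<in> I \<and> \<beta> \<noteq> 0" and bmin: "\<forall>y. y \<in> I \<and> y \<noteq> 0 \<longrightarrow> m \<beta> \<le> m y"
    using ex_has_least_nat[of "\<lambda>y. y \<in> I \<and> y \<noteq> 0" x m] x by blast
  have bZ: "\<beta> \<in> Z8" using b sub by blast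
  have "I = principal_Z8 \<beta>"
  proof
    show "principal_Z8 \<beta> \<subseteq> I" unfolding principal_Z8_def using mul b by blast
  next
    show "I \<subseteq> principal_Z8 \<beta>"
    proof
      fix \<gamma> assume g: "\<gamma> \<in> I"
      hence gZ: "\<gamma> \<in> Z8" using sub by blast
      obtain q where qZ: "q \<in> Z8" and lt: "Nr (\<gamma> - q * \<beta>) < Nr \<beta>" using euclid[OF bZ _ gZ] b by blast
      have "\<gamma> + (- q) * \<beta> \<in> I" using add[OF g mul[OF Z8_uminus[OF qZ] conjunct1[OF b]]] .
      hence dI: "\<gamma> - q * \<beta> \<in> I" by simp
      have "\<gamma> - q * \<beta> = 0"
      proof (rule ccontr)
        assume "\<gamma> - q * \<beta> \<noteq> 0"
        hence "m \<beta> \<le> m (\<gamma> - q * \<beta>)" using bmin dI by blast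
        hence "Nr \<beta> \<le> Nr (\<gamma> - q * \<beta>)" using mr bZ dI sub by (metis of_nat_le_iff subsetD)
        thus False using lt by simp
      qed
      hence "\<gamma> = q * \<beta>" by simp
      thus "\<gamma> \<in> principal_Z8 \<beta>" unfolding principal_Z8_def using qZ by blast
    qed
  qed
  thus ?thesis using b by blast
qed

lemma principal_unit:
  assumes "u \<in> Z8" "w \<in> Z8" "u * w = 1"
  shows "principal_Z8 (x * u) = principal_Z8 x"
proof
  show "principal_Z8 (x * u) \<subseteq> principal_Z8 x"
    unfolding principal_Z8_def using assms Z8_mult by (auto simp: mult.assoc[symmetric])
next
  show "principal_Z8 x \<subseteq> principal_Z8 (x * u)"
  proof
    fix y assume "y \<in> principal_Z8 x"
    then obtain r where r: "r \<in> Z8" "y = r * x" unfolding principal_Z8_def by blast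
    have "y = (r * w) * (x * u)" using r assms by (simp add: algebra_simps)
    thus "y \<in> principal_Z8 (x * u)" unfolding principal_Z8_def using Z8_mult r assms by blast
  qed
qed

lemma Nr1_unit: assumes "v \<in> Z8" "Nr v = 1" shows "\<exists>w\<in>Z8. v * w = 1"
  using star_in[OF assms(1)] mult_star[of v] assms(2) by auto

definition lam :: complex where "lam = vec 1 1 0 (-1)"
definition lam' :: complex where "lam' = vec (-1) 1 0 (-1)"

lemma lam_in: "lam \<in> Z8" "lam' \<in> Z8" unfolding lam_def lam'_def by (rule vec_in)+

lemma lam_unit: "lam * lam' = 1" "lam' * lam = 1"
  unfolding lam_def lam'_def vec_mult using vec_of_int[of 1] by simp_all

lemma lam_norms:
  "(cmod lam)^2 = 3 + 2 * sqrt 2" "(cmod (sg lam))^2 = 3 - 2 * sqrt 2"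
  "(cmod lam')^2 = 3 - 2 * sqrt 2" "(cmod (sg lam'))^2 = 3 + 2 * sqrt 2"
  unfolding lam_def lam'_def cmod_vec cmod_sg_vec by simp_all

theorem theorem5:
  assumes "is_ideal_Z8 I" and "I \<noteq> {0}"
  shows "\<exists>\<alpha>'\<in>I. I = principal_Z8 \<alpha>' \<and>
           (\<forall>\<gamma>\<in>I. \<gamma> \<noteq> 0 \<longrightarrow> canon_norm \<alpha>' \<le> canon_norm \<gamma>)"
proof -
  have sub: "I \<subseteq> Z8" and mul: "\<And>r x. r \<in> Z8 \<Longrightarrow> x \<in> I \<Longrightarrow> r * x \<in> I"
    using assms(1) unfolding is_ideal_Z8_def by auto
  obtain \<beta> where b: "\<beta> \<in> I" "I = principal_Z8 \<beta>" using principal_exists[OF assms] by blast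
  define m where "m = (\<lambda>y. nat \<lfloor>Sr y\<rfloor>)"
  have mr: "real (m y) = Sr y" if "y \<in> Z8" for y
    using Sr_int[OF that] Sr_nonneg unfolding m_def by (metis nat_floor_int)
  define G where "G = {x. x \<in> I \<and> I = principal_Z8 x}"
  obtain \<alpha> where a: "\<alpha> \<in> G" and amin: "\<forall>y. y \<in> G \<longrightarrow> m \<alpha> \<le> m y"
    using ex_has_least_nat[of "\<lambda>y. y \<in> G" \<beta> m] b unfolding G_def by blast
  have aI: "\<alpha> \<in> I" and aP: "I = principal_Z8 \<alpha>" using a unfolding G_def by auto
  have aZ: "\<alpha> \<in> Z8" using aI sub by blast
  have Smin: "Sr \<alpha> \<le> Sr y" if "y \<in> G" for y
  proof -
    have "y \<in> Z8" using that sub unfolding G_def by blast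
    thus ?thesis using amin that mr aZ by (metis of_nat_le_iff)
  qed
  have unitG: "\<alpha> * u \<in> G" if "u \<in> Z8" "w \<in> Z8" "u * w = 1" for u w
  proof -
    have "\<alpha> * u \<in> I" using mul[OF that(1) aI] by (simp add: mult.commute)
    moreover have "I = principal_Z8 (\<alpha> * u)" using principal_unit[OF that] aP by simp
    ultimately show ?thesis unfolding G_def by blast
  qed
  define p where "p = (cmod \<alpha>)^2"
  define q where "q = (cmod (sg \<alpha>))^2"
  have Sa: "Sr \<alpha> = p + q" unfolding Sr_def p_def q_def ..
  have h1: "p + q \<le> p * (3 + 2 * sqrt 2) + q * (3 - 2 * sqrt 2)"
  proof -
    have "Sr \<alpha> \<le> Sr (\<alpha> * lam)" using Smin unitG lam_in lam_unit by blast
    thus ?thesis unfolding Sa Sr_mult[OF aZ lam_in(1)] lam_norms p_def q_def .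
  qed
  have h2: "p + q \<le> p * (3 - 2 * sqrt 2) + q * (3 + 2 * sqrt 2)"
  proof -
    have "Sr \<alpha> \<le> Sr (\<alpha> * lam')" using Smin unitG lam_in lam_unit by blast
    thus ?thesis unfolding Sa Sr_mult[OF aZ lam_in(2)] lam_norms p_def q_def .
  qed
  have "\<forall>\<gamma>\<in>I. \<gamma> \<noteq> 0 \<longrightarrow> canon_norm \<alpha> \<le> canon_norm \<gamma>"
  proof (intro ballI impI)
    fix \<gamma> assume g: "\<gamma> \<in> I" "\<gamma> \<noteq> 0"
    have gZ: "\<gamma> \<in> Z8" using g sub by blast
    obtain r where r: "r \<in> Z8" "\<gamma> = r * \<alpha>" using g aP unfolding principal_Z8_def by blast
    have rnz: "r \<noteq> 0" using r g by auto
    have "Sr \<alpha> \<le> Sr \<gamma>"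
    proof (cases "Nr r = 1")
      case True
      then obtain w where w: "w \<in> Z8" "r * w = 1" using Nr1_unit r by blast
      have "\<alpha> * r \<in> G" using unitG[OF r(1) w] .
      thus ?thesis using Smin r by (simp add: mult.commute)
    next
      case False
      have "Nr r \<ge> 1" using Nr_ge1 r rnz by blast
      moreover obtain k where "Nr r = of_int k" using Nr_int r by blast
      ultimately have N2: "Nr r \<ge> 2" using False by simp
      have "Sr \<gamma> = p * (cmod r)^2 + q * (cmod (sg r))^2"
        unfolding r(2) mult.commute[of r] Sr_mult[OF aZ r(1)] p_def q_def ..
      moreover have "p + q \<le> p * (cmod r)^2 + q * (cmod (sg r))^2"
        by (rule key_ineq) (use N2 h1 h2 in \<open>simp_all add: p_def q_def Nr_def\<close>)
      ultimately show ?thesis using Sa by simp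
    qed
    thus "canon_norm \<alpha> \<le> canon_norm \<gamma>" unfolding canon_norm_eq[OF aZ] canon_norm_eq[OF gZ] by simp
  qed
  thus ?thesis using aI aP by blast
qed

end
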